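(* Let $V$ be a finite set of vertical lines and $H$ a finite set of horizontal closed segments in the plane. For a finite set $Q$ of points, let $H_Q\subseteq H$ be the set of segments of $H$ containing no point of $Q$, and let $h(\cdot)$ denote the minimum number of points needed to hit a set of horizontal segments. Suppose that (a) for every point $p$ lying on a line of $V$, $h(H_{\{p\}})=h(H)$, and (b) for every two points $p,q$ lying on two distinct lines of $V$, $h(H_{\{p,q\}})=h(H)$. Then every hitting set for $V\cup H$ has at least $|V|+h(H)$ points.
   Context: A hitting set for a family of subsets of the plane is a finite set of points such that every member contains at least one of the points. Segments may overlap arbitrarily. *)

theory Defs
  imports "HOL-Analysis.Analysis"
begin

type_synonym point = "real \<times> real"

definition vertical_line :: "point set \<Rightarrow> bool" where
  "vertical_line L \<longleftrightarrow> (\<exists>c. L = {p. fst p = c})"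

definition horizontal_segment :: "point set \<Rightarrow> bool" where
  "horizontal_segment S \<longleftrightarrow> (\<exists>a b y. a \<le> b \<and> S = {p. a \<le> fst p \<and> fst p \<le> b \<and> snd p = y})"

definition hitting_set :: "point set \<Rightarrow> point set set \<Rightarrow> bool" where
  "hitting_set P F \<longleftrightarrow> finite P \<and> (\<forall>S\<in>F. S \<inter> P \<noteq> {})"

definition hit_num :: "point set set \<Rightarrow> nat" where
  "hit_num F = (LEAST k. \<exists>P. hitting_set P F \<and> card P = k)"

definition avoiding :: "point set set \<Rightarrow> point set \<Rightarrow> point set set" where
  "avoiding H Q = {S \<in> H. S \<inter> Q = {}}"

end

theory Submission
  imports Defs
begin

lemma hit_exists:
  assumes "finite F" "{} \<notin> F"
  shows "\<exists>P. hitting_set P F"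
proof -
  let ?P = "(\<lambda>S. SOME p. p \<in> S) ` F"
  have "\<forall>S\<in>F. S \<inter> ?P \<noteq> {}"
  proof
    fix S assume "S \<in> F"
    then have "S \<noteq> {}" using assms by auto
    then have "(SOME p. p \<in> S) \<in> S" by (meson ex_in_conv someI_ex)
    then show "S \<inter> ?P \<noteq> {}" using \<open>S \<in> F\<close> by blast
  qed
  then show ?thesis unfolding hitting_set_def using assms by blast
qed

lemma hit_num_wit:
  assumes "finite F" "{} \<notin> F"
  shows "\<exists>P. hitting_set P F \<and> card P = hit_num F"
proof -
  obtain P where "hitting_set P F" using hit_exists[OF assms] by blast
  then have "\<exists>k. \<exists>P. hitting_set P F \<and> card P = k" by blast
  from LeastI_ex[OF this] show ?thesis unfolding hit_num_def .
qed

lemma hit_num_le: "hitting_set P F \<Longrightarrow> hit_num F \<le> card P"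
  unfolding hit_num_def by (rule Least_le) blast

lemma hit_num_union_sep:
  assumes "finite F1" "{} \<notin> F1" "finite F2" "{} \<notin> F2"
    and sep: "\<forall>S1\<in>F1. \<forall>S2\<in>F2. S1 \<inter> S2 = {}"
  shows "hit_num (F1 \<union> F2) = hit_num F1 + hit_num F2"
proof (rule antisym)
  obtain P1 where P1: "hitting_set P1 F1" "card P1 = hit_num F1"
    using hit_num_wit assms by blast
  obtain P2 where P2: "hitting_set P2 F2" "card P2 = hit_num F2"
    using hit_num_wit assms by blast
  have "hitting_set (P1 \<union> P2) (F1 \<union> F2)"
    using P1 P2 unfolding hitting_set_def by blast
  then have "hit_num (F1 \<union> F2) \<le> card (P1 \<union> P2)" by (rule hit_num_le)
  also have "\<dots> \<le> card P1 + card P2" by (rule card_Un_le)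
  finally show "hit_num (F1 \<union> F2) \<le> hit_num F1 + hit_num F2" using P1 P2 by simp
next
  have "finite (F1 \<union> F2)" "{} \<notin> F1 \<union> F2" using assms by auto
  then obtain P where P: "hitting_set P (F1 \<union> F2)" "card P = hit_num (F1 \<union> F2)"
    using hit_num_wit by blast
  have fP: "finite P" using P unfolding hitting_set_def by blast
  have h1: "hitting_set (P \<inter> \<Union>F1) F1" using P fP unfolding hitting_set_def by blast
  have h2: "hitting_set (P \<inter> \<Union>F2) F2" using P fP unfolding hitting_set_def by blast
  have disj: "(P \<inter> \<Union>F1) \<inter> (P \<inter> \<Union>F2) = {}" using sep by blast
  have "hit_num F1 + hit_num F2 \<le> card (P \<inter> \<Union>F1) + card (P \<inter> \<Union>F2)"
    using hit_num_le[OF h1] hit_num_le[OF h2] by simp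
  also have "\<dots> = card ((P \<inter> \<Union>F1) \<union> (P \<inter> \<Union>F2))"
    using card_Un_disjoint[OF _ _ disj] fP by simp
  also have "\<dots> \<le> card P" by (rule card_mono[OF fP]) blast
  finally show "hit_num F1 + hit_num F2 \<le> hit_num (F1 \<union> F2)" using P by simp
qed

lemma step:
  assumes fin: "finite H" and ne: "{} \<notin> H"
    and reg: "\<forall>S\<in>H. S \<inter> B0 = {} \<longrightarrow> S \<inter> Reg \<noteq> {} \<longrightarrow> S \<subseteq> Reg"
    and rReg: "r \<in> Reg" and B0Z: "B0 \<subseteq> Z" and ZReg: "Z \<inter> Reg = {}"
  shows "hit_num (avoiding H (insert r Z)) = hit_num (avoiding H Z - {S\<in>H. S \<subseteq> Reg}) + hit_num {S\<in>H. S \<subseteq> Reg \<and> r \<notin> S}"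
    and "hit_num (avoiding H Z) = hit_num (avoiding H Z - {S\<in>H. S \<subseteq> Reg}) + hit_num {S\<in>H. S \<subseteq> Reg}"
proof -
  let ?R = "{S\<in>H. S \<subseteq> Reg}"
  let ?A = "avoiding H Z - ?R"
  have sepA: "\<forall>S1\<in>?A. \<forall>S2\<in>?R. S1 \<inter> S2 = {}"
  proof (intro ballI)
    fix S1 S2 assume a: "S1 \<in> ?A" and b: "S2 \<in> ?R"
    show "S1 \<inter> S2 = {}"
    proof (rule ccontr)
      assume "S1 \<inter> S2 \<noteq> {}"
      then have "S1 \<inter> Reg \<noteq> {}" using b by blast
      moreover have "S1 \<inter> B0 = {}" using a B0Z unfolding avoiding_def by blast
      ultimately have "S1 \<subseteq> Reg" using reg a unfolding avoiding_def by blast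
      then show False using a unfolding avoiding_def by blast
    qed
  qed
  have e1: "avoiding H (insert r Z) = ?A \<union> {S\<in>H. S \<subseteq> Reg \<and> r \<notin> S}"
  proof (rule set_eqI, rule iffI)
    fix S assume "S \<in> avoiding H (insert r Z)"
    then show "S \<in> ?A \<union> {S\<in>H. S \<subseteq> Reg \<and> r \<notin> S}" unfolding avoiding_def by blast
  next
    fix S assume S: "S \<in> ?A \<union> {S\<in>H. S \<subseteq> Reg \<and> r \<notin> S}"
    show "S \<in> avoiding H (insert r Z)"
    proof (cases "S \<in> ?A")
      case True
      have "r \<notin> S"
      proof
        assume "r \<in> S"
        then have "S \<inter> Reg \<noteq> {}" using rReg by blast
        moreover have "S \<inter> B0 = {}" using True B0Z unfolding avoiding_def by blast
        ultimately have "S \<subseteq> Reg" using reg True unfolding avoiding_def by blast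
        then show False using True unfolding avoiding_def by blast
      qed
      then show ?thesis using True unfolding avoiding_def by blast
    next
      case False
      then show ?thesis using S ZReg unfolding avoiding_def by blast
    qed
  qed
  have e2: "avoiding H Z = ?A \<union> ?R" using ZReg unfolding avoiding_def by blast
  have fA: "finite ?A" "{} \<notin> ?A" using fin ne unfolding avoiding_def by auto
  have fR: "finite ?R" "{} \<notin> ?R" using fin ne by auto
  have fR': "finite {S\<in>H. S \<subseteq> Reg \<and> r \<notin> S}" "{} \<notin> {S\<in>H. S \<subseteq> Reg \<and> r \<notin> S}"
    using fin ne by auto
  have sepA': "\<forall>S1\<in>?A. \<forall>S2\<in>{S\<in>H. S \<subseteq> Reg \<and> r \<notin> S}. S1 \<inter> S2 = {}"
    using sepA by blast
  show "hit_num (avoiding H (insert r Z)) = hit_num ?A + hit_num {S\<in>H. S \<subseteq> Reg \<and> r \<notin> S}"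
    by (rule trans[OF arg_cong[OF e1, of hit_num] hit_num_union_sep[OF fA fR' sepA']])
  show "hit_num (avoiding H Z) = hit_num ?A + hit_num ?R"
    by (rule trans[OF arg_cong[OF e2, of hit_num] hit_num_union_sep[OF fA fR sepA]])
qed

lemma cancel:
  assumes fin: "finite H" and ne: "{} \<notin> H"
    and reg: "\<forall>S\<in>H. S \<inter> B0 = {} \<longrightarrow> S \<inter> Reg \<noteq> {} \<longrightarrow> S \<subseteq> Reg"
    and rReg: "r \<in> Reg" and B0Z: "B0 \<subseteq> Q0" and ZReg: "Q0 \<inter> Reg = {}"
    and eq: "hit_num (avoiding H (insert r B0)) = hit_num (avoiding H B0)"
  shows "hit_num (avoiding H (insert r Q0)) = hit_num (avoiding H Q0)"
proof -
  have B0R: "B0 \<inter> Reg = {}" using B0Z ZReg by blast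
  note s1 = step[OF fin ne reg rReg order_refl B0R]
  note s2 = step[OF fin ne reg rReg B0Z ZReg]
  show ?thesis using s1 s2 eq by simp
qed

lemma seg_nonempty: "horizontal_segment S \<Longrightarrow> S \<noteq> {}"
  unfolding horizontal_segment_def by force

lemma all_Q:
  assumes finH: "finite H" and segs: "\<forall>S\<in>H. horizontal_segment S"
    and lines: "\<forall>L\<in>V. vertical_line L"
    and a: "\<forall>L\<in>V. \<forall>p\<in>L. hit_num (avoiding H {p}) = hit_num H"
    and b: "\<forall>L1\<in>V. \<forall>L2\<in>V. L1 \<noteq> L2 \<longrightarrow> (\<forall>p\<in>L1. \<forall>q\<in>L2.
              hit_num (avoiding H {p, q}) = hit_num H)"
  shows "finite Q \<Longrightarrow> inj_on fst Q \<Longrightarrow> (\<forall>q\<in>Q. \<exists>L\<in>V. q\<in>L) \<Longrightarrow> hit_num (avoiding H Q) = hit_num H"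
proof (induction "card Q" arbitrary: Q rule: less_induct)
  case less
  have ne: "{} \<notin> H" using segs seg_nonempty by blast
  show ?case
  proof (cases "Q = {}")
    case True
    then show ?thesis unfolding avoiding_def by simp
  next
    case False
    define m where "m = Max (fst ` Q)"
    have "m \<in> fst ` Q" unfolding m_def using False less.prems(1) by (intro Max_in) auto
    then obtain r where rQ: "r \<in> Q" and rm: "fst r = m" by auto
    have rmax: "\<forall>z\<in>Q. fst z \<le> fst r"
    proof
      fix z assume "z \<in> Q"
      then have "fst z \<in> fst ` Q" by simp
      then have "fst z \<le> m" unfolding m_def by (rule Max_ge[OF finite_imageI[OF less.prems(1)]])
      then show "fst z \<le> fst r" using rm by simp
    qed
    define Q0 where "Q0 = Q - {r}"
    have cQ0: "card Q0 < card Q" unfolding Q0_def using card_Diff1_less[OF less.prems(1) rQ] .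
    have IH: "hit_num (avoiding H Q0) = hit_num H"
      using less.hyps[OF cQ0] less.prems unfolding Q0_def by (auto intro: inj_on_subset)
    have QQ0: "Q = insert r Q0" unfolding Q0_def using rQ by blast
    obtain Lr where Lr: "Lr \<in> V" "r \<in> Lr" using less.prems rQ by blast
    show ?thesis
    proof (cases "\<exists>z\<in>Q0. snd z = snd r")
      case True
      define S0 where "S0 = {z\<in>Q0. snd z = snd r}"
      have fS0: "finite S0" "S0 \<noteq> {}" unfolding S0_def using True less.prems(1) unfolding Q0_def by auto
      define m2 where "m2 = Max (fst ` S0)"
      have "m2 \<in> fst ` S0" unfolding m2_def using fS0 by (intro Max_in) auto
      then obtain q where qS0: "q \<in> S0" and qm: "fst q = m2" by auto
      have qmax: "\<forall>z\<in>S0. fst z \<le> fst q"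
      proof
        fix z assume "z \<in> S0"
        then have "fst z \<in> fst ` S0" by simp
        then have "fst z \<le> m2" unfolding m2_def by (rule Max_ge[OF finite_imageI[OF fS0(1)]])
        then show "fst z \<le> fst q" using qm by simp
      qed
      have qQ0: "q \<in> Q0" and qy: "snd q = snd r" using qS0 unfolding S0_def by auto
      have "q \<noteq> r" using qQ0 unfolding Q0_def by blast
      then have "fst q \<noteq> fst r" using less.prems(2) qQ0 rQ unfolding Q0_def inj_on_def by blast
      moreover have "fst q \<le> fst r" using rmax qQ0 unfolding Q0_def by blast
      ultimately have qr: "fst q < fst r" by simp
      obtain Lq where Lq: "Lq \<in> V" "q \<in> Lq" using less.prems qQ0 unfolding Q0_def by blast
      have "Lq \<noteq> Lr"
      proof
        assume "Lq = Lr"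
        then obtain c where "Lr = {p. fst p = c}" using lines Lr unfolding vertical_line_def by blast
        then show False using Lq Lr \<open>Lq = Lr\<close> qr by auto
      qed
      then have e_qr: "hit_num (avoiding H {q, r}) = hit_num H" using b Lq Lr by blast
      have e_q: "hit_num (avoiding H {q}) = hit_num H" using a Lq by blast
      define Reg where "Reg = {p::point. snd p = snd r \<and> fst p > fst q}"
      have reg: "\<forall>S\<in>H. S \<inter> {q} = {} \<longrightarrow> S \<inter> Reg \<noteq> {} \<longrightarrow> S \<subseteq> Reg"
      proof (intro ballI impI)
        fix S assume SH: "S \<in> H" and qS: "S \<inter> {q} = {}" and SR: "S \<inter> Reg \<noteq> {}"
        obtain a' b' y where S: "a' \<le> b'" "S = {p. a' \<le> fst p \<and> fst p \<le> b' \<and> snd p = y}"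
          using segs SH unfolding horizontal_segment_def by blast
        obtain p where p: "p \<in> S" "p \<in> Reg" using SR by blast
        have py: "y = snd r" "a' \<le> fst p" "fst p \<le> b'" "fst p > fst q"
          using p S unfolding Reg_def by auto
        have "q \<notin> S" using qS by blast
        then have "fst q < a'" using S(2) py qy by auto
        then show "S \<subseteq> Reg" using S(2) py unfolding Reg_def by auto
      qed
      have rReg: "r \<in> Reg" unfolding Reg_def using qr by simp
      have ZReg: "Q0 \<inter> Reg = {}"
      proof -
        { fix z assume z: "z \<in> Q0" "z \<in> Reg"
          then have "z \<in> S0" unfolding S0_def Reg_def by simp
          then have "fst z \<le> fst q" using qmax by blast
          then have False using z unfolding Reg_def by simp }
        then show ?thesis by blast
      qed
      have "insert r {q} = {q, r}" by blast
      then have eq: "hit_num (avoiding H (insert r {q})) = hit_num (avoiding H {q})"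
        using e_qr e_q by simp
      have "hit_num (avoiding H (insert r Q0)) = hit_num (avoiding H Q0)"
        by (rule cancel[OF finH ne reg rReg _ ZReg eq]) (use qQ0 in blast)
      then show ?thesis using IH QQ0 by simp
    next
      case False
      define Reg where "Reg = {p::point. snd p = snd r}"
      have reg: "\<forall>S\<in>H. S \<inter> {} = {} \<longrightarrow> S \<inter> Reg \<noteq> {} \<longrightarrow> S \<subseteq> Reg"
      proof (intro ballI impI)
        fix S assume SH: "S \<in> H" and SR: "S \<inter> Reg \<noteq> {}"
        obtain a' b' y where S: "a' \<le> b'" "S = {p. a' \<le> fst p \<and> fst p \<le> b' \<and> snd p = y}"
          using segs SH unfolding horizontal_segment_def by blast
        then show "S \<subseteq> Reg" using SR unfolding Reg_def by auto
      qed
      have rReg: "r \<in> Reg" unfolding Reg_def by simp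
      have ZReg: "Q0 \<inter> Reg = {}" using False unfolding Reg_def by blast
      have H0: "avoiding H {} = H" unfolding avoiding_def by simp
      have eq: "hit_num (avoiding H (insert r {})) = hit_num (avoiding H {})"
        using a Lr H0 by simp
      have "hit_num (avoiding H (insert r Q0)) = hit_num (avoiding H Q0)"
        by (rule cancel[OF finH ne reg rReg _ ZReg eq]) simp
      then show ?thesis using IH QQ0 by simp
    qed
  qed
qed

theorem mainTheorem11:
  fixes V H :: "point set set"
  assumes "finite V" and "\<forall>L\<in>V. vertical_line L"
    and "finite H" and "\<forall>S\<in>H. horizontal_segment S"
    and a: "\<forall>L\<in>V. \<forall>p\<in>L. hit_num (avoiding H {p}) = hit_num H"
    and b: "\<forall>L1\<in>V. \<forall>L2\<in>V. L1 \<noteq> L2 \<longrightarrow> (\<forall>p\<in>L1. \<forall>q\<in>L2.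
              hit_num (avoiding H {p, q}) = hit_num H)"
    and "hitting_set P (V \<union> H)"
  shows "card P \<ge> card V + hit_num H"
proof -
  have fP: "finite P" using assms(7) unfolding hitting_set_def by blast
  have "\<forall>L\<in>V. \<exists>p. p \<in> P \<inter> L" using assms(7) unfolding hitting_set_def by blast
  then obtain f where f: "\<forall>L\<in>V. f L \<in> P \<inter> L" by metis
  define Q where "Q = f ` V"
  have lineeq: "\<And>L1 L2 z w. L1 \<in> V \<Longrightarrow> L2 \<in> V \<Longrightarrow> z \<in> L1 \<Longrightarrow> w \<in> L2 \<Longrightarrow> fst z = fst w \<Longrightarrow> L1 = L2"
  proof -
    fix L1 L2 z w assume h: "L1 \<in> V" "L2 \<in> V" "z \<in> L1" "w \<in> L2" "fst z = fst w"
    obtain c1 where c1: "L1 = {p. fst p = c1}" using h assms(2) unfolding vertical_line_def by blast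
    obtain c2 where c2: "L2 = {p. fst p = c2}" using h assms(2) unfolding vertical_line_def by blast
    show "L1 = L2" using c1 c2 h by auto
  qed
  have injf: "inj_on f V"
  proof (rule inj_onI)
    fix L1 L2 assume "L1 \<in> V" "L2 \<in> V" "f L1 = f L2"
    then show "L1 = L2" using lineeq[of L1 L2 "f L1" "f L2"] f by auto
  qed
  have cardQ: "card Q = card V" unfolding Q_def using card_image[OF injf] .
  have injQ: "inj_on fst Q"
  proof (rule inj_onI)
    fix z w assume "z \<in> Q" "w \<in> Q" "fst z = fst w"
    then obtain L1 L2 where "L1 \<in> V" "L2 \<in> V" "z = f L1" "w = f L2" unfolding Q_def by blast
    then show "z = w" using lineeq[of L1 L2 z w] f \<open>fst z = fst w\<close> by auto
  qed
  have QV: "\<forall>q\<in>Q. \<exists>L\<in>V. q \<in> L" unfolding Q_def using f by blast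
  have finQ: "finite Q" unfolding Q_def using assms(1) by simp
  have QP: "Q \<subseteq> P" unfolding Q_def using f by blast
  have hQ: "hit_num (avoiding H Q) = hit_num H"
    using all_Q[OF assms(3) assms(4) assms(2) a b finQ injQ QV] .
  have "hitting_set (P - Q) (avoiding H Q)"
    using assms(7) fP unfolding hitting_set_def avoiding_def by blast
  then have "hit_num H \<le> card (P - Q)" using hit_num_le hQ by metis
  moreover have "card (P - Q) = card P - card Q" using card_Diff_subset[OF finQ QP] .
  moreover have "card Q \<le> card P" using card_mono[OF fP QP] .
  ultimately show ?thesis using cardQ by simp
qed

end
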